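(* Let $d\in\{1,2\}$. Identify $\mathbb{R}^2$ with $\mathbb{C}$ in the usual way, so that a map $z\mapsto \rho\,O(z)$ with $\rho>1$ real and $O$ a rotation is multiplication by a complex number $\mu$ with $|\mu|=\rho$ (for $d=1$, $\mu=\pm\rho\in\mathbb{R}$). Let $\Lambda\subset\mathbb{R}^d$ be a lattice, and suppose $\mu\in\Lambda$ with $|\mu|>1$ satisfies $\mu\Lambda\subset\Lambda$. Then there exists an inflationary tessellation of $\mathbb{R}^d$ with multiplier $\mu$.
   Context: Let $m$ denote Lebesgue measure on $\mathbb{R}^d$. Two measurable sets are essentially disjoint if their intersection has measure $0$. A tile is a measurable subset of $\mathbb{R}^d$ of positive measure. Tiles are grouped into finitely many types (equivalence classes), e.g. two tiles have the same type if one is a translate of the other. A tessellation (tiling) of $\mathbb{R}^d$ is a finite collection of types together with a covering of $\mathbb{R}^d$ by pairwise essentially disjoint tiles, each belonging to one of the types. With representatives $R_1,\dots,R_N$ of the types, the tessellation is inflationary with multiplier $\rho O$ ($\rho>1$ real, $O$ orthogonal) if each set $\rho\,O(R_i)$ is a union of essentially disjoint tiles of the given types. A lattice in $\mathbb{R}^d$ is a discrete additive subgroup of rank $d$. *)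

theory Defs
  imports "HOL-Analysis.Analysis"
begin

definition lattice :: "'a::euclidean_space set \<Rightarrow> bool" where
  "lattice L \<longleftrightarrow> 0 \<in> L \<and> (\<forall>x\<in>L. \<forall>y\<in>L. x - y \<in> L) \<and> discrete L \<and> dim L = DIM('a)"

definition ess_disjoint :: "'a::euclidean_space set \<Rightarrow> 'a set \<Rightarrow> bool" where
  "ess_disjoint A B \<longleftrightarrow> A \<inter> B \<in> null_sets lebesgue"

definition is_tile :: "'a::euclidean_space set \<Rightarrow> bool" where
  "is_tile A \<longleftrightarrow> A \<in> sets lebesgue \<and> emeasure lebesgue A > 0 \<and> bounded A"

definition of_type :: "(nat \<Rightarrow> 'a::euclidean_space set) \<Rightarrow> nat \<Rightarrow> 'a set \<Rightarrow> bool" where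
  "of_type R N t \<longleftrightarrow> (\<exists>i<N. \<exists>v. t = (\<lambda>x. v + x) ` R i)"

definition tessellation :: "(nat \<Rightarrow> 'a::euclidean_space set) \<Rightarrow> nat \<Rightarrow> 'a set set \<Rightarrow> bool" where
  "tessellation R N T \<longleftrightarrow> (\<forall>i<N. is_tile (R i)) \<and> (\<forall>t\<in>T. of_type R N t)
     \<and> pairwise ess_disjoint T \<and> \<Union>T = UNIV"

definition inflationary_tessellation ::
  "('a::euclidean_space \<Rightarrow> 'a) \<Rightarrow> (nat \<Rightarrow> 'a set) \<Rightarrow> nat \<Rightarrow> 'a set set \<Rightarrow> bool" where
  "inflationary_tessellation f R N T \<longleftrightarrow> tessellation R N T \<and>
     (\<forall>i<N. \<exists>S. (\<forall>s\<in>S. of_type R N s) \<and> pairwise ess_disjoint S \<and> \<Union>S = f ` R i)"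

end

theory Submission
  imports Defs
begin


definition cvec :: "complex \<Rightarrow> real^2" where "cvec z = vector [Re z, Im z]"
definition vcpx :: "real^2 \<Rightarrow> complex" where "vcpx v = Complex (v$1) (v$2)"

lemma vcpx_cvec[simp]: "vcpx (cvec z) = z"
  by (simp add: cvec_def vcpx_def)
lemma cvec_vcpx[simp]: "cvec (vcpx v) = v"
  unfolding cvec_def vcpx_def
  by (simp add: vec_eq_iff forall_2)

lemma box_complex_vimage:
  "vcpx -` box l u = box (cvec l) (cvec u)"
  by (auto simp: mem_box_cart mem_box cvec_def vcpx_def Basis_complex_def forall_2)

lemma Basis_2: "(Basis :: (real^2) set) = {axis 1 1, axis 2 1}"
  by (auto simp: Basis_vec_def UNIV_2)

lemma prod_Basis_2: "(\<Prod>b\<in>Basis. (v::real^2) \<bullet> b) = v$1 * v$2"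
proof -
  have "axis 1 (1::real) \<noteq> (axis 2 1 :: real^2)" by (simp add: axis_eq_axis)
  then show ?thesis by (simp add: Basis_2 inner_axis)
qed

lemma lborel_complex_distr: "(lborel :: complex measure) = distr lborel borel vcpx"
proof (rule lborel_eqI)
  have [measurable]: "vcpx \<in> borel_measurable borel"
    unfolding vcpx_def Complex_eq by measurable
  fix l u :: complex assume le: "\<And>b. b \<in> Basis \<Longrightarrow> l \<bullet> b \<le> u \<bullet> b"
  have le2: "\<forall>b\<in>Basis. cvec l \<bullet> b \<le> cvec u \<bullet> b"
    using le[of 1] le[of "\<i>"] by (auto simp: Basis_2 inner_axis cvec_def Basis_complex_def)
  show "emeasure (distr lborel borel vcpx) (box l u) = (\<Prod>b\<in>Basis. (u - l) \<bullet> b)"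
    using le2
    by (simp add: emeasure_distr box_complex_vimage emeasure_lborel_box_eq prod_Basis_2 Basis_complex_def
       cvec_def)
qed simp


lemma linear_cvec: "linear cvec"
  by (rule linearI) (auto simp: cvec_def vec_eq_iff forall_2)
lemma linear_vcpx: "linear vcpx"
  by (rule linearI) (auto simp: vcpx_def complex_eq_iff)
lemma vcpx_measurable[measurable]: "vcpx \<in> borel_measurable borel"
  unfolding vcpx_def Complex_eq by measurable

lemma emeasure_cvec:
  assumes "S \<in> sets borel"
  shows "emeasure lborel S = emeasure lborel (cvec ` S)"
proof -
  have "vcpx -` S = cvec ` S"
    by (auto simp: image_iff) (metis cvec_vcpx)
  then show ?thesis
    using assms by (subst lborel_complex_distr) (simp add: emeasure_distr)
qed

lemma measure_cmult_compact:
  fixes S :: "complex set"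
  assumes "compact S"
  shows "measure lebesgue ((*) c ` S) = (cmod c)^2 * measure lebesgue S"
proof -
  define g where "g = cvec \<circ> (*) c \<circ> vcpx"
  have lg: "linear g" unfolding g_def
    by (intro linear_compose linear_cvec linear_vcpx) (simp add: bounded_linear.linear[OF bounded_linear_mult_right])
  have cS: "compact (cvec ` S)"
    using assms linear_cvec by (intro compact_continuous_image linear_continuous_on) (simp add: linear_conv_bounded_linear)
  have cS': "compact ((*) c ` S)"
    using assms by (intro compact_continuous_image continuous_intros)
  have img: "cvec ` ((*) c ` S) = g ` (cvec ` S)"
    by (auto simp: g_def image_iff)
  have "measure lebesgue ((*) c ` S) = measure lborel ((*) c ` S)"
    using cS' by (simp add: compact_imp_closed borel_closed)
  also have "\<dots> = measure lborel (cvec ` ((*) c ` S))"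
    using cS' emeasure_cvec[of "(*) c ` S"] by (simp add: measure_def compact_imp_closed borel_closed)
  also have "\<dots> = measure lebesgue (g ` (cvec ` S))"
  proof -
    have "compact (g ` (cvec ` S))"
      by (rule compact_continuous_image[OF linear_continuous_on cS]) (use lg in \<open>simp add: linear_conv_bounded_linear\<close>)
    then show ?thesis using img by (simp add: compact_imp_closed borel_closed)
  qed
  also have "\<dots> = \<bar>det (matrix g)\<bar> * measure lebesgue (cvec ` S)"
    using lg cS by (simp add: measure_linear_image lmeasurable_compact)
  also have "det (matrix g) = (cmod c)^2"
    by (simp add: det_2 matrix_def g_def vcpx_def cvec_def axis_def cmod_power2)
       (simp add: power2_eq_square)
  also have "measure lebesgue (cvec ` S) = measure lborel S"
    using assms emeasure_cvec[of S] cS by (simp add: measure_def compact_imp_closed borel_closed)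
  also have "\<dots> = measure lebesgue S"
    using assms by (simp add: compact_imp_closed borel_closed)
  finally show ?thesis by simp
qed




lemma pairwise_ess_disjoint_count:
  assumes fin: "finite S"
    and meas: "\<And>A. A \<in> S \<Longrightarrow> A \<in> lmeasurable \<and> measure lebesgue A = c"
    and big: "real (card S) * c \<le> measure lebesgue (\<Union>S)"
  shows "pairwise ess_disjoint S"
proof (rule pairwiseI, rule ccontr)
  fix A B assume AS: "A \<in> S" and BS: "B \<in> S" and AB: "A \<noteq> B" and nd: "\<not> ess_disjoint A B"
  have Am: "A \<in> lmeasurable" and Bm: "B \<in> lmeasurable" using meas AS BS by auto
  have ABm: "A \<inter> B \<in> lmeasurable" using Am Bm by auto
  have pos: "measure lebesgue (A \<inter> B) > 0"
  proof (rule ccontr)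
    assume "\<not> ?thesis"
    then have "measure lebesgue (A \<inter> B) = 0" using measure_nonneg[of lebesgue "A \<inter> B"] by linarith
    then have "emeasure lebesgue (A \<inter> B) = 0" using ABm
      by (simp add: emeasure_eq_measure2)
    then show False using nd ABm unfolding ess_disjoint_def by (auto intro: null_setsI)
  qed
  define R where "R = S - {A, B}"
  have fR: "finite R" using fin by (simp add: R_def)
  have cardR: "card R = card S - 2" using AS BS AB fin by (simp add: R_def card_Diff_subset)
  have c2: "card S \<ge> 2"
  proof -
    have "{A, B} \<subseteq> S" using AS BS by auto
    then have "card {A, B} \<le> card S" using fin by (simp add: card_mono)
    then show ?thesis using AB by simp
  qed
  have eqU: "\<Union>S = (A \<union> B) \<union> \<Union>R" using AS BS by (auto simp: R_def)
  have Rm: "\<Union>R \<in> sets lebesgue" using fR meas by (auto simp: R_def)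
  have "measure lebesgue (\<Union>S) \<le> measure lebesgue (A \<union> B) + measure lebesgue (\<Union>R)"
    unfolding eqU using Am Bm Rm by (intro measure_Un_le) auto
  also have "measure lebesgue (A \<union> B) = 2 * c - measure lebesgue (A \<inter> B)"
    using measure_Un3[OF Am Bm] meas AS BS by simp
  also have "measure lebesgue (\<Union>R) \<le> (\<Sum>X\<in>R. measure lebesgue X)"
    using fR meas by (intro measure_Union_le) (auto simp: R_def)
  also have "(\<Sum>X\<in>R. measure lebesgue X) = real (card R) * c"
    using meas by (simp add: R_def)
  finally have "measure lebesgue (\<Union>S) < real (card S) * c"
    using pos cardR c2 by (simp add: of_nat_diff algebra_simps)
  then show False using big by simp
qed




lemma closure_UN_finite:
  fixes f :: "'b \<Rightarrow> 'a::topological_space set"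
  shows "finite A \<Longrightarrow> closure (\<Union>x\<in>A. f x) = (\<Union>x\<in>A. closure (f x))"
  by (induction A rule: finite_induct) auto

inductive_set Fset :: "complex \<Rightarrow> complex set \<Rightarrow> complex set" for \<mu> D where
  F0: "0 \<in> Fset \<mu> D"
| FS: "x \<in> Fset \<mu> D \<Longrightarrow> d \<in> D \<Longrightarrow> (d + x) / \<mu> \<in> Fset \<mu> D"

definition Kset :: "complex \<Rightarrow> complex set \<Rightarrow> complex set" where
  "Kset \<mu> D = closure (Fset \<mu> D)"

lemma Fset_bound:
  assumes "cmod \<mu> > 1" "finite D" "x \<in> Fset \<mu> D"
  shows "cmod x \<le> (\<Sum>d\<in>D. cmod d) / (cmod \<mu> - 1)"
  using assms(3)
proof induction
  case F0 then show ?case using assms by (simp add: sum_nonneg)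
next
  case (FS x d)
  define M where "M = (\<Sum>d\<in>D. cmod d)"
  define B where "B = M / (cmod \<mu> - 1)"
  have dM: "cmod d \<le> M" unfolding M_def
    using assms(2) FS by (intro member_le_sum) auto
  have eq: "M + B = B * cmod \<mu>" using assms(1) by (simp add: B_def field_simps)
  have "cmod ((d + x) / \<mu>) = cmod (d + x) / cmod \<mu>" by (simp add: norm_divide)
  also have "\<dots> \<le> (M + B) / cmod \<mu>"
  proof (rule divide_right_mono)
    show "cmod (d + x) \<le> M + B"
      using norm_triangle_ineq[of d x] dM FS.IH unfolding M_def B_def by linarith
  qed simp
  also have "\<dots> = B" using eq assms(1) by (auto simp: field_simps)
  finally show ?case by (simp add: B_def M_def)
qed

lemma Kset_compact:
  assumes "cmod \<mu> > 1" "finite D"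
  shows "compact (Kset \<mu> D)"
proof -
  have "bounded (Fset \<mu> D)"
    using Fset_bound[OF assms] by (auto simp: bounded_iff)
  then show ?thesis unfolding Kset_def by (simp add: compact_closure)
qed

lemma Kset_bound:
  assumes "cmod \<mu> > 1" "finite D" "x \<in> Kset \<mu> D"
  shows "cmod x \<le> (\<Sum>d\<in>D. cmod d) / (cmod \<mu> - 1)"
proof -
  have "Fset \<mu> D \<subseteq> cball 0 ((\<Sum>d\<in>D. cmod d) / (cmod \<mu> - 1))"
    using Fset_bound[OF assms(1,2)] by auto
  then have "Kset \<mu> D \<subseteq> cball 0 ((\<Sum>d\<in>D. cmod d) / (cmod \<mu> - 1))"
    unfolding Kset_def by (simp add: closure_minimal)
  then show ?thesis using assms(3) by auto
qed

lemma zero_in_Kset: "0 \<in> Kset \<mu> D"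
  unfolding Kset_def using F0 closure_subset by blast

lemma Fset_scale:
  assumes "\<mu> \<noteq> 0" "0 \<in> D"
  shows "(*) \<mu> ` Fset \<mu> D = (\<Union>d\<in>D. (+) d ` Fset \<mu> D)"
proof (intro equalityI subsetI)
  fix y assume "y \<in> (*) \<mu> ` Fset \<mu> D"
  then obtain x where x: "x \<in> Fset \<mu> D" "y = \<mu> * x" by auto
  from x(1) show "y \<in> (\<Union>d\<in>D. (+) d ` Fset \<mu> D)"
  proof cases
    case F0 then show ?thesis using x assms by (auto intro!: bexI[of _ 0] image_eqI[of _ _ 0] Fset.F0)
  next
    case (FS x' d)
    then show ?thesis using x assms by (auto intro!: bexI[of _ d] image_eqI[of _ _ x'])
  qed
next
  fix y assume "y \<in> (\<Union>d\<in>D. (+) d ` Fset \<mu> D)"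
  then obtain d x where "d \<in> D" "x \<in> Fset \<mu> D" "y = d + x" by auto
  then show "y \<in> (*) \<mu> ` Fset \<mu> D"
    using assms by (auto intro!: image_eqI[of _ _ "(d + x) / \<mu>"] Fset.FS)
qed

lemma linear_cmult: "linear ((*) (c::complex))"
  by (simp add: bounded_linear.linear[OF bounded_linear_mult_right])

lemma inj_cmult: "c \<noteq> 0 \<Longrightarrow> inj ((*) (c::complex))"
  by (auto simp: inj_def)

lemma Kset_scale:
  assumes "\<mu> \<noteq> 0" "0 \<in> D" "finite D"
  shows "(*) \<mu> ` Kset \<mu> D = (\<Union>d\<in>D. (+) d ` Kset \<mu> D)"
proof -
  have "(*) \<mu> ` Kset \<mu> D = closure ((*) \<mu> ` Fset \<mu> D)"
    unfolding Kset_def using assms by (intro closure_injective_linear_image linear_cmult inj_cmult)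
  also have "\<dots> = (\<Union>d\<in>D. closure ((+) d ` Fset \<mu> D))"
    using assms by (simp add: Fset_scale closure_UN_finite)
  also have "\<dots> = (\<Union>d\<in>D. (+) d ` Kset \<mu> D)"
    by (simp add: closure_translation Kset_def)
  finally show ?thesis .
qed

lemma image_cmult_translate: "(*) c ` ((+) e ` X) = (+) (c * e) ` ((*) (c::complex) ` X)"
  by (auto simp: image_iff distrib_left)

lemma Kset_patch:
  assumes "\<mu> \<noteq> 0" "0 \<in> D" "finite D"
  shows "\<exists>E. finite E \<and> card E \<le> card D ^ k \<and> 0 \<in> E \<and>
           (*) (\<mu>^k) ` Kset \<mu> D = (\<Union>e\<in>E. (+) e ` Kset \<mu> D)"
proof (induction k)
  case 0
  then show ?case by (intro exI[of _ "{0}"]) auto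
next
  case (Suc k)
  then obtain E where E: "finite E" "card E \<le> card D ^ k" "0 \<in> E"
    "(*) (\<mu>^k) ` Kset \<mu> D = (\<Union>e\<in>E. (+) e ` Kset \<mu> D)" by blast
  define E' where "E' = (\<lambda>(e, d). \<mu> * e + d) ` (E \<times> D)"
  have "finite E'" using E(1) assms(3) by (simp add: E'_def)
  moreover have "card E' \<le> card D ^ Suc k"
  proof -
    have "card E' \<le> card (E \<times> D)" unfolding E'_def by (rule card_image_le) (use E(1) assms(3) in simp)
    also have "\<dots> = card E * card D" by (simp add: card_cartesian_product)
    also have "\<dots> \<le> card D ^ k * card D" using E(2) by simp
    finally show ?thesis by (simp add: mult.commute)
  qed
  moreover have "0 \<in> E'" using E(3) assms(2) by (force simp: E'_def)
  moreover have "(*) (\<mu>^Suc k) ` Kset \<mu> D = (\<Union>e\<in>E'. (+) e ` Kset \<mu> D)"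
  proof -
    have "(*) (\<mu>^Suc k) ` Kset \<mu> D = (*) \<mu> ` ((*) (\<mu>^k) ` Kset \<mu> D)"
      by (simp add: image_image mult.assoc)
    also have "\<dots> = (\<Union>e\<in>E. (+) (\<mu> * e) ` ((*) \<mu> ` Kset \<mu> D))"
      by (simp add: E(4) image_UN image_cmult_translate)
    also have "\<dots> = (\<Union>e\<in>E. \<Union>d\<in>D. (+) (\<mu> * e + d) ` Kset \<mu> D)"
      by (simp add: Kset_scale[OF assms] image_UN image_image add.assoc)
    also have "\<dots> = (\<Union>e\<in>E'. (+) e ` Kset \<mu> D)"
      by (auto simp: E'_def)
    finally show ?thesis .
  qed
  ultimately show ?case by blast
qed




definition Lat :: "complex \<Rightarrow> complex \<Rightarrow> complex set" where
  "Lat w1 w2 = {of_int a * w1 + of_int b * w2 | a b. True}"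

lemma coords:
  assumes "Im (cnj w1 * w2) \<noteq> 0"
  shows "z = of_real ((Re z * Im w2 - Im z * Re w2) / Im (cnj w1 * w2)) * w1
           + of_real ((Re w1 * Im z - Im w1 * Re z) / Im (cnj w1 * w2)) * w2"
proof -
  define \<Delta> where "\<Delta> = Re w1 * Im w2 - Im w1 * Re w2"
  have d: "Im (cnj w1 * w2) = \<Delta>" by (simp add: \<Delta>_def algebra_simps)
  have n: "\<Delta> \<noteq> 0" using assms d by simp
  have r: "(Re z * Im w2 - Im z * Re w2) / \<Delta> * Re w1 + (Re w1 * Im z - Im w1 * Re z) / \<Delta> * Re w2 = Re z"
  proof -
    have "(Re z * Im w2 - Im z * Re w2) * Re w1 + (Re w1 * Im z - Im w1 * Re z) * Re w2 = Re z * \<Delta>"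
      by (simp add: \<Delta>_def algebra_simps)
    then show ?thesis using n by (simp add: field_simps)
  qed
  have i: "(Re z * Im w2 - Im z * Re w2) / \<Delta> * Im w1 + (Re w1 * Im z - Im w1 * Re z) / \<Delta> * Im w2 = Im z"
  proof -
    have "(Re z * Im w2 - Im z * Re w2) * Im w1 + (Re w1 * Im z - Im w1 * Re z) * Im w2 = Im z * \<Delta>"
      by (simp add: \<Delta>_def algebra_simps)
    then show ?thesis using n by (simp add: field_simps)
  qed
  show ?thesis unfolding d using r i by (simp add: complex_eq_iff)
qed

lemma Lat_countable: "countable (Lat w1 w2)"
proof -
  have "Lat w1 w2 = (\<lambda>(a::int, b::int). of_int a * w1 + of_int b * w2) ` UNIV"
    by (auto simp: Lat_def)
  then show ?thesis by simp
qed

lemma Lat_closed: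
  assumes ind: "Im (cnj w1 * w2) \<noteq> 0"
  shows "closed (Lat w1 w2)"
proof -
  define f where "f = (\<lambda>p::real \<times> real. fst p *\<^sub>R w1 + snd p *\<^sub>R w2)"
  have lf: "linear f" unfolding f_def
    by (rule linearI) (auto simp: algebra_simps scaleR_add_right scaleR_add_left)
  have "inj f"
    unfolding linear_injective_0[OF lf]
  proof (intro allI impI)
    fix p :: "real \<times> real" assume "f p = 0"
    then have e: "fst p *\<^sub>R w1 + snd p *\<^sub>R w2 = 0" by (simp add: f_def)
    then have "Im (cnj w1 * (fst p *\<^sub>R w1 + snd p *\<^sub>R w2)) = 0" by simp
    then have "snd p * Im (cnj w1 * w2) = 0" by (simp add: algebra_simps scaleR_conv_of_real)
    then have s: "snd p = 0" using ind by simp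
    have "w1 \<noteq> 0" using ind by auto
    then have "fst p = 0" using e s by simp
    then show "p = 0" using s by (simp add: prod_eq_iff)
  qed
  moreover have "closed ((\<int>::real set) \<times> (\<int>::real set))" by (rule closed_Times) (rule closed_Ints)+
  ultimately have "closed (f ` (\<int> \<times> \<int>))" using lf by (intro closed_injective_linear_image) 
  moreover have "f ` (\<int> \<times> \<int>) = Lat w1 w2"
  proof (intro equalityI subsetI)
    fix x assume "x \<in> f ` (\<int> \<times> \<int>)"
    then obtain a b where "a \<in> \<int>" "b \<in> \<int>" "x = a *\<^sub>R w1 + b *\<^sub>R w2" by (auto simp: f_def)
    then obtain i j where "x = of_int i *\<^sub>R w1 + of_int j *\<^sub>R w2" by (auto elim!: Ints_cases)
    then show "x \<in> Lat w1 w2" unfolding Lat_def by (auto simp: scaleR_conv_of_real)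
  next
    fix x assume "x \<in> Lat w1 w2"
    then obtain i j :: int where "x = of_int i * w1 + of_int j * w2" by (auto simp: Lat_def)
    then have "x = f (of_int i, of_int j)" by (simp add: f_def scaleR_conv_of_real)
    then show "x \<in> f ` (\<int> \<times> \<int>)" by auto
  qed
  ultimately show ?thesis by simp
qed

lemma Lat_near:
  assumes ind: "Im (cnj w1 * w2) \<noteq> 0"
  shows "\<exists>l\<in>Lat w1 w2. cmod (z - l) \<le> cmod w1 + cmod w2"
proof -
  define s where "s = (Re z * Im w2 - Im z * Re w2) / Im (cnj w1 * w2)"
  define t where "t = (Re w1 * Im z - Im w1 * Re z) / Im (cnj w1 * w2)"
  have z: "z = of_real s * w1 + of_real t * w2" using coords[OF ind, of z] by (simp add: s_def t_def)
  define l where "l = of_int \<lfloor>s\<rfloor> * w1 + of_int \<lfloor>t\<rfloor> * w2"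
  have lL: "l \<in> Lat w1 w2" by (auto simp: l_def Lat_def)
  have "z - l = of_real (s - of_int \<lfloor>s\<rfloor>) * w1 + of_real (t - of_int \<lfloor>t\<rfloor>) * w2"
    by (simp add: z l_def algebra_simps)
  then have "cmod (z - l) \<le> \<bar>s - of_int \<lfloor>s\<rfloor>\<bar> * cmod w1 + \<bar>t - of_int \<lfloor>t\<rfloor>\<bar> * cmod w2"
    by (metis norm_mult norm_of_real norm_triangle_ineq)
  also have "\<dots> \<le> 1 * cmod w1 + 1 * cmod w2"
    by (intro add_mono mult_right_mono) (auto simp: abs_if, linarith+)
  finally show ?thesis using lL by auto
qed




lemma Fset_Lat_cover:
  assumes exp: "\<forall>l\<in>Lat w1 w2. \<exists>d\<in>D. \<exists>l'\<in>Lat w1 w2. l = d + \<mu> * l'" and mu: "\<mu> \<noteq> 0"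
  shows "l \<in> Lat w1 w2 \<Longrightarrow> \<exists>f\<in>Fset \<mu> D. \<exists>l'\<in>Lat w1 w2. l / \<mu>^k = f + l'"
proof (induction k arbitrary: l)
  case 0
  then show ?case by (intro bexI[of _ 0] Fset.F0 bexI[of _ l]) auto
next
  case (Suc k)
  then obtain f l' where f: "f \<in> Fset \<mu> D" "l' \<in> Lat w1 w2" "l / \<mu>^k = f + l'" by blast
  obtain d l'' where d: "d \<in> D" "l'' \<in> Lat w1 w2" "l' = d + \<mu> * l''" using exp f(2) by blast
  have "l / \<mu>^Suc k = (l / \<mu>^k) / \<mu>" by (simp add: field_simps)
  also have "\<dots> = (d + f) / \<mu> + l''" using mu by (simp add: f(3) d(3) field_simps)
  finally show ?case using d f by (blast intro: Fset.FS)
qed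

lemma K_Lat_cover:
  assumes exp: "\<forall>l\<in>Lat w1 w2. \<exists>d\<in>D. \<exists>l'\<in>Lat w1 w2. l = d + \<mu> * l'"
    and cm: "cmod \<mu> > 1" and fin: "finite D" and ind: "Im (cnj w1 * w2) \<noteq> 0"
  shows "(\<Union>l\<in>Lat w1 w2. (+) l ` Kset \<mu> D) = UNIV"
proof -
  let ?U = "\<Union>l\<in>Lat w1 w2. (+) l ` Kset \<mu> D"
  have mu: "\<mu> \<noteq> 0" using cm by auto
  have "?U = (\<Union>x\<in>Lat w1 w2. \<Union>y\<in>Kset \<mu> D. {x + y})" by auto
  then have clU: "closed ?U"
    using closed_compact_sums[OF Lat_closed[OF ind] Kset_compact[OF cm fin]] by simp
  have "z \<in> closure ?U" for z
    unfolding closure_approachable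
  proof (intro allI impI)
    fix e :: real assume e: "e > 0"
    define C where "C = cmod w1 + cmod w2"
    obtain k where k: "C / e < cmod \<mu> ^ k" using real_arch_pow[OF cm] by blast
    have pk: "cmod \<mu> ^ k > 0" using mu by simp
    obtain l where l: "l \<in> Lat w1 w2" "cmod (z * \<mu>^k - l) \<le> C"
      using Lat_near[OF ind] C_def by blast
    obtain f l' where f: "f \<in> Fset \<mu> D" "l' \<in> Lat w1 w2" "l / \<mu>^k = f + l'"
      using Fset_Lat_cover[OF exp mu l(1)] by blast
    have yU: "l / \<mu>^k \<in> ?U"
    proof -
      have "f \<in> Kset \<mu> D" using f(1) closure_subset[of "Fset \<mu> D"] by (auto simp: Kset_def)
      then have "l / \<mu>^k \<in> (+) l' ` Kset \<mu> D" using f(3) by (auto simp: image_iff add.commute)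
      then show ?thesis using f(2) by blast
    qed
    have "dist (l / \<mu>^k) z = cmod (z * \<mu>^k - l) / cmod \<mu> ^ k"
      using mu by (simp add: dist_norm norm_divide[symmetric] norm_power[symmetric] field_simps norm_minus_commute)
    also have "\<dots> \<le> C / cmod \<mu> ^ k" using l(2) pk by (simp add: divide_right_mono)
    also have "\<dots> < e" using k e pk by (simp add: field_simps)
    finally show "\<exists>y\<in>?U. dist y z < e" using yU by blast
  qed
  then show ?thesis using clU closure_closed by auto
qed

lemma K_interior:
  assumes exp: "\<forall>l\<in>Lat w1 w2. \<exists>d\<in>D. \<exists>l'\<in>Lat w1 w2. l = d + \<mu> * l'"
    and cm: "cmod \<mu> > 1" and fin: "finite D" and ind: "Im (cnj w1 * w2) \<noteq> 0"
  shows "\<exists>y r. r > 0 \<and> ball y r \<subseteq> Kset \<mu> D"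
proof -
  let ?G = "(\<lambda>l. (+) l ` Kset \<mu> D) ` Lat w1 w2"
  have "\<exists>T\<in>?G. interior T \<noteq> {}"
  proof (rule ccontr)
    assume "\<not> ?thesis"
    then have "euclidean interior_of \<Union>?G = {}"
      using Lat_countable Kset_compact[OF cm fin]
      by (intro Baire_category_alt)
         (auto simp: completely_metrizable_space_euclidean compact_imp_closed closed_translation)
    then show False using K_Lat_cover[OF assms] by simp
  qed
  then obtain l where "interior ((+) l ` Kset \<mu> D) \<noteq> {}" by blast
  then have "interior (Kset \<mu> D) \<noteq> {}" by (simp add: interior_translation)
  then obtain y where "y \<in> interior (Kset \<mu> D)" by blast
  then show ?thesis by (meson mem_interior)
qed




primrec lev :: "complex \<Rightarrow> complex set \<Rightarrow> nat \<Rightarrow> complex set" where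
  "lev A E 0 = {0}"
| "lev A E (Suc j) = (\<lambda>(e, d). e + A * d) ` (E \<times> lev A E j)"

lemma lev_finite: "finite E \<Longrightarrow> finite (lev A E j) \<and> card (lev A E j) \<le> card E ^ j"
proof (induction j)
  case 0 then show ?case by simp
next
  case (Suc j)
  then have f: "finite (lev A E j)" "card (lev A E j) \<le> card E ^ j" by auto
  have "card (lev A E (Suc j)) \<le> card (E \<times> lev A E j)"
    using f Suc.prems by (simp only: lev.simps) (rule card_image_le, simp)
  also have "\<dots> = card E * card (lev A E j)" by (simp add: card_cartesian_product)
  also have "\<dots> \<le> card E * card E ^ j" using f(2) by simp
  finally show ?case using f Suc.prems by simp
qed

lemma lev_mono_Suc: "0 \<in> E \<Longrightarrow> lev A E j \<subseteq> lev A E (Suc j)"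
proof (induction j)
  case 0 then show ?case by (force simp: image_iff)
next
  case (Suc j)
  then show ?case by (auto simp: image_iff)
qed

lemma lev_mono: "0 \<in> E \<Longrightarrow> i \<le> j \<Longrightarrow> lev A E i \<subseteq> lev A E j"
  using lift_Suc_mono_le[of "lev A E"] lev_mono_Suc by blast

lemma lev_patch:
  assumes patch: "(*) A ` K = (\<Union>e\<in>E. (+) e ` K)"
  shows "(*) (A^j) ` K = (\<Union>d\<in>lev A E j. (+) d ` K)"
proof (induction j)
  case 0 then show ?case by simp
next
  case (Suc j)
  have "(*) (A^Suc j) ` K = (*) A ` ((*) (A^j) ` K)"
    by (simp add: image_image mult.assoc)
  also have "\<dots> = (\<Union>d\<in>lev A E j. (+) (A * d) ` ((*) A ` K))"
    by (simp add: Suc image_UN image_cmult_translate)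
  also have "\<dots> = (\<Union>d\<in>lev A E j. \<Union>e\<in>E. (+) (A * d + e) ` K)"
    by (simp add: patch image_UN image_image add.assoc)
  also have "\<dots> = (\<Union>d\<in>lev A E (Suc j). (+) d ` K)"
    by (auto simp: add.commute)
  finally show ?case .
qed

lemma tess_from_patch:
  fixes A :: complex and K :: "complex set"
  assumes cA: "cmod A > 1" and cK: "compact K" and ball0: "ball 0 \<rho> \<subseteq> K" and rho: "\<rho> > 0"
    and finE: "finite E" and E0: "0 \<in> E"
    and patch: "(*) A ` K = (\<Union>e\<in>E. (+) e ` K)"
    and cardE: "real (card E) \<le> cmod A ^ 2"
  shows "\<exists>T. (\<forall>t\<in>T. \<exists>v. t = (+) v ` K) \<and> pairwise ess_disjoint T \<and> \<Union>T = UNIV"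
proof -
  define T where "T = (\<lambda>d. (+) d ` K) ` (\<Union>j. lev A E j)"
  have A0: "A \<noteq> 0" using cA by auto
  have "\<forall>t\<in>T. \<exists>v. t = (+) v ` K" by (auto simp: T_def)
  moreover have "\<Union>T = UNIV"
  proof (intro equalityI subsetI UNIV_I)
    fix z :: complex
    obtain j where j: "cmod z / \<rho> < cmod A ^ j" using real_arch_pow[OF cA] by blast
    have "z / A^j \<in> ball 0 \<rho>"
      using j rho A0 by (simp add: norm_divide norm_power field_simps)
    then have "z / A^j \<in> K" using ball0 by auto
    then have "z \<in> (*) (A^j) ` K" using A0 by (auto simp: image_iff intro!: bexI[of _ "z / A^j"])
    then show "z \<in> \<Union>T" unfolding lev_patch[OF patch] T_def by auto
  qed
  moreover have "pairwise ess_disjoint T"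
  proof (rule pairwiseI)
    fix t1 t2 assume t1: "t1 \<in> T" and t2: "t2 \<in> T" and ne: "t1 \<noteq> t2"
    obtain j1 d1 where d1: "d1 \<in> lev A E j1" "t1 = (+) d1 ` K" using t1 by (auto simp: T_def)
    obtain j2 d2 where d2: "d2 \<in> lev A E j2" "t2 = (+) d2 ` K" using t2 by (auto simp: T_def)
    define j where "j = max j1 j2"
    have "d1 \<in> lev A E j" "d2 \<in> lev A E j"
      using d1 d2 lev_mono[OF E0, of j1 j A] lev_mono[OF E0, of j2 j A] by (auto simp: j_def)
    define S where "S = (\<lambda>d. (+) d ` K) ` lev A E j"
    have fl: "finite (lev A E j)" "card (lev A E j) \<le> card E ^ j" using lev_finite[OF finE] by auto
    have "pairwise ess_disjoint S"
    proof (rule pairwise_ess_disjoint_count)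
      show "finite S" using fl by (simp add: S_def)
      show "A' \<in> lmeasurable \<and> measure lebesgue A' = measure lebesgue K" if "A' \<in> S" for A'
        using that cK by (auto simp: S_def measure_translation lmeasurable_compact compact_translation)
      have "real (card S) \<le> real (card (lev A E j))" using fl by (simp add: S_def card_image_le)
      also have "\<dots> \<le> real (card E) ^ j" using fl by (simp flip: of_nat_power)
      also have "\<dots> \<le> (cmod A ^ 2) ^ j" using cardE by (simp add: power_mono)
      also have "\<dots> = cmod (A^j) ^ 2" by (simp add: norm_power power_mult[symmetric] mult.commute)
      finally have cS: "real (card S) \<le> cmod (A^j) ^ 2" .
      have "\<Union>S = (*) (A^j) ` K" by (simp add: S_def lev_patch[OF patch])
      then have "measure lebesgue (\<Union>S) = cmod (A^j) ^ 2 * measure lebesgue K"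
        by (simp add: measure_cmult_compact cK)
      then show "real (card S) * measure lebesgue K \<le> measure lebesgue (\<Union>S)"
        using cS by (simp add: mult_right_mono)
    qed
    moreover have "t1 \<in> S" "t2 \<in> S" using d1 d2 \<open>d1 \<in> lev A E j\<close> \<open>d2 \<in> lev A E j\<close> by (auto simp: S_def)
    ultimately show "ess_disjoint t1 t2" using ne by (auto simp: pairwise_def)
  qed
  ultimately show ?thesis by blast
qed




theorem core:
  assumes cm: "cmod \<mu> > 1" and fin: "finite D" and D0: "0 \<in> D"
    and cardD: "real (card D) \<le> cmod \<mu> ^ 2"
    and exp: "\<forall>l\<in>Lat w1 w2. \<exists>d\<in>D. \<exists>l'\<in>Lat w1 w2. l = d + \<mu> * l'"
    and ind: "Im (cnj w1 * w2) \<noteq> 0"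
  shows "\<exists>R N T. inflationary_tessellation (\<lambda>z. \<mu> * z) R N T"
proof -
  define K where "K = Kset \<mu> D"
  define B where "B = (\<Sum>d\<in>D. cmod d) / (cmod \<mu> - 1)"
  have mu0: "\<mu> \<noteq> 0" using cm by auto
  have cK: "compact K" using Kset_compact[OF cm fin] by (simp add: K_def)
  have KB: "x \<in> K \<Longrightarrow> cmod x \<le> B" for x using Kset_bound[OF cm fin] by (simp add: K_def B_def)
  have B0: "B \<ge> 0" using KB[of 0] zero_in_Kset[of \<mu> D] by (auto simp: K_def)
  obtain y r where r: "r > 0" "ball y r \<subseteq> K" using K_interior[OF exp cm fin ind] by (auto simp: K_def)
  have yK: "y \<in> K" using r by auto
  obtain k where k: "3 + 6 * B / r < cmod \<mu> ^ k" using real_arch_pow[OF cm] by blast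
  define A where "A = \<mu> ^ k"
  have "6 * B / r \<ge> 0" using B0 r(1) by simp
  then have cA: "cmod A > 3" "cmod A > 6 * B / r" using k by (auto simp: A_def norm_power)
  have A1: "A \<noteq> 1" using cA by auto
  obtain E where E: "finite E" "card E \<le> card D ^ k" "0 \<in> E" "(*) A ` K = (\<Union>e\<in>E. (+) e ` K)"
    using Kset_patch[OF mu0 D0 fin, of k] by (auto simp: A_def K_def)
  have "A * y \<in> (*) A ` K" using yK by auto
  then obtain e where e: "e \<in> E" "A * y - e \<in> K" using E(4) by auto
  define k0 where "k0 = A * y - e"
  define x where "x = e / (A - 1)"
  have Ax: "A * x = x + e" using A1 by (simp add: x_def field_simps)
  have "cmod e \<le> cmod A * B + B"
  proof -
    have "e = A * y - k0" by (simp add: k0_def)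
    then have "cmod e \<le> cmod A * cmod y + cmod k0"
      by (metis norm_mult norm_triangle_ineq4)
    also have "\<dots> \<le> cmod A * B + B" using KB[OF yK] KB[of k0] e(2) k0_def
      by (intro add_mono mult_left_mono) auto
    finally show ?thesis .
  qed
  moreover have "cmod (A - 1) \<ge> cmod A - 1" by (metis norm_one norm_triangle_ineq2)
  ultimately have "cmod x \<le> (cmod A * B + B) / (cmod A - 1)"
    using cA by (simp add: x_def norm_divide frac_le B0)
  also have "\<dots> \<le> 2 * B" using cA B0 mult_left_mono[of 3 "cmod A" B] by (simp add: field_simps)
  finally have xB: "cmod x \<le> 2 * B" .
  have "A * (x - y) = x - k0" using Ax by (simp add: k0_def algebra_simps)
  then have "cmod A * cmod (x - y) = cmod (x - k0)" by (metis norm_mult)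
  also have "\<dots> \<le> cmod x + cmod k0" by (rule norm_triangle_ineq4)
  also have "\<dots> \<le> 3 * B" using xB KB[of k0] e(2) k0_def by auto
  finally have "cmod A * cmod (x - y) \<le> 3 * B" .
  moreover have "cmod A > 0" using cA by linarith
  ultimately have "cmod (x - y) \<le> 3 * B / cmod A" by (simp add: pos_le_divide_eq mult.commute)
  also have "\<dots> < r / 2"
  proof -
    have cA0: "cmod A > 0" using cA by linarith
    have "6 * B < r * cmod A" using cA(2) r(1) by (simp add: field_simps)
    then show ?thesis using cA0 by (simp add: divide_less_eq field_simps)
  qed
  finally have xy: "cmod (x - y) < r / 2" .
  have bx: "ball x (r/2) \<subseteq> K"
  proof
    fix z assume "z \<in> ball x (r/2)"
    then have "cmod (x - z) < r / 2" by (simp add: dist_norm)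
    moreover have "cmod (y - z) \<le> cmod (x - y) + cmod (x - z)"
      using norm_triangle_ineq4[of "x - z" "x - y"] by (simp add: norm_minus_commute algebra_simps)
    ultimately have "cmod (y - z) < r" using xy by linarith
    then show "z \<in> K" using r(2) by (auto simp: dist_norm)
  qed
  define K' where "K' = (+) (- x) ` K"
  define E' where "E' = (\<lambda>d. d - e) ` E"
  have cK': "compact K'" unfolding K'_def by (rule compact_translation) (rule cK)
  have b0: "ball 0 (r/2) \<subseteq> K'"
  proof
    fix z :: complex assume "z \<in> ball 0 (r/2)"
    then have "x + z \<in> K" using bx by (auto simp: dist_norm)
    then show "z \<in> K'" by (auto simp: K'_def image_iff intro!: bexI[of _ "x + z"])
  qed
  have patch': "(*) A ` K' = (\<Union>e'\<in>E'. (+) e' ` K')"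
  proof -
    have "(*) A ` K' = (+) (A * - x) ` ((*) A ` K)" unfolding K'_def by (rule image_cmult_translate)
    also have "\<dots> = (\<Union>d\<in>E. (+) (A * - x) ` ((+) d ` K))" by (simp only: E(4) image_UN)
    also have "\<dots> = (\<Union>d\<in>E. (+) (d - e) ` K')"
    proof (intro SUP_cong refl)
      fix d
      have eq: "A * - x + (d + z) = d - e + (- x + z)" for z using Ax
        by (simp add: algebra_simps)
      show "(+) (A * - x) ` ((+) d ` K) = (+) (d - e) ` K'"
        unfolding K'_def image_image by (rule image_cong[OF refl]) (rule eq)
    qed
    also have "\<dots> = (\<Union>e'\<in>E'. (+) e' ` K')" by (simp add: E'_def)
    finally show ?thesis .
  qed
  have cardE': "real (card E') \<le> cmod A ^ 2"
  proof -
    have "card E' \<le> card E" unfolding E'_def by (rule card_image_le[OF E(1)])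
    then have "real (card E') \<le> real (card D) ^ k" using E(2)
      by (metis of_nat_le_iff of_nat_power order_trans)
    also have "\<dots> \<le> (cmod \<mu> ^ 2) ^ k" using cardD by (simp add: power_mono)
    also have "\<dots> = cmod A ^ 2" by (simp add: A_def norm_power power_mult[symmetric] mult.commute)
    finally show ?thesis .
  qed
  obtain T where T: "\<forall>t\<in>T. \<exists>v. t = (+) v ` K'" "pairwise ess_disjoint T" "\<Union>T = UNIV"
    using tess_from_patch[OF _ cK' b0 _ _ _ patch' cardE'] cA r(1) E(1,3) e(1)
    by (auto simp: E'_def image_iff)
  define R where "R = (\<lambda>_::nat. K)"
  have tileK: "is_tile K"
  proof -
    have "K \<in> sets lebesgue" using cK by (simp add: compact_imp_closed borel_closed)
    moreover have "emeasure lebesgue K > 0"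
    proof -
      have "emeasure lebesgue (ball y r) \<le> emeasure lebesgue K"
        using r(2) cK by (intro emeasure_mono) (auto simp: compact_imp_closed borel_closed)
      moreover have "emeasure lebesgue (ball y r) > 0"
        using r(1) by (simp add: emeasure_ball)
      ultimately show ?thesis by order
    qed
    moreover have "bounded K" using cK by (simp add: compact_imp_bounded)
    ultimately show ?thesis by (simp add: is_tile_def)
  qed
  have tess: "tessellation R 1 T"
    unfolding tessellation_def
  proof (intro conjI allI impI ballI)
    show "is_tile (R i)" for i using tileK by (simp add: R_def)
    fix t assume "t \<in> T"
    then obtain v where "t = (+) v ` K'" using T(1) by blast
    then have "t = (\<lambda>z. (v - x) + z) ` R 0" by (simp add: K'_def R_def image_image algebra_simps)
    then show "of_type R 1 t" by (auto simp: of_type_def)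
  qed (use T in auto)
  have infl: "\<exists>S. (\<forall>s\<in>S. of_type R 1 s) \<and> pairwise ess_disjoint S \<and> \<Union>S = (\<lambda>z. \<mu> * z) ` R i"
    if "i < 1" for i
  proof (intro exI conjI)
    define S where "S = (\<lambda>d. (+) d ` K) ` D"
    show "\<forall>s\<in>S. of_type R 1 s" by (auto simp: S_def of_type_def R_def)
    have US: "\<Union>S = (*) \<mu> ` K" by (simp add: S_def Kset_scale[OF mu0 D0 fin] K_def)
    then show "\<Union>S = (\<lambda>z. \<mu> * z) ` R i" by (simp add: R_def)
    show "pairwise ess_disjoint S"
    proof (rule pairwise_ess_disjoint_count)
      show "finite S" using fin by (simp add: S_def)
      show "A' \<in> lmeasurable \<and> measure lebesgue A' = measure lebesgue K" if "A' \<in> S" for A'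
        using that cK by (auto simp: S_def measure_translation lmeasurable_compact compact_translation)
      have "real (card S) \<le> real (card D)" using fin by (simp add: S_def card_image_le)
      also have "\<dots> \<le> cmod \<mu> ^ 2" by (rule cardD)
      finally have cS: "real (card S) \<le> cmod \<mu> ^ 2" .
      have "measure lebesgue (\<Union>S) = cmod \<mu> ^ 2 * measure lebesgue K"
        by (simp add: US measure_cmult_compact cK)
      then show "real (card S) * measure lebesgue K \<le> measure lebesgue (\<Union>S)"
        using cS by (simp add: mult_right_mono)
    qed
  qed
  have "inflationary_tessellation (\<lambda>z. \<mu> * z) R 1 T"
    unfolding inflationary_tessellation_def using tess infl by blast
  then show ?thesis by blast
qed




lemma lattice_neg: "lattice L \<Longrightarrow> x \<in> L \<Longrightarrow> - x \<in> L"
  unfolding lattice_def by (metis diff_0)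

lemma lattice_add: "lattice L \<Longrightarrow> x \<in> L \<Longrightarrow> y \<in> L \<Longrightarrow> x + y \<in> L"
  using lattice_neg[of L y] unfolding lattice_def by (metis diff_minus_eq_add)

lemma lattice_diff: "lattice L \<Longrightarrow> x \<in> L \<Longrightarrow> y \<in> L \<Longrightarrow> x - y \<in> L"
  unfolding lattice_def by blast

lemma lattice_nat_mult: "lattice L \<Longrightarrow> x \<in> L \<Longrightarrow> of_nat n *\<^sub>R x \<in> L"
proof (induction n)
  case 0 then show ?case by (simp add: lattice_def)
next
  case (Suc n) then show ?case using lattice_add[of L x "of_nat n *\<^sub>R x"] by (simp add: algebra_simps)
qed

lemma lattice_int_mult: "lattice L \<Longrightarrow> x \<in> L \<Longrightarrow> of_int n *\<^sub>R x \<in> L"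
proof (cases "n \<ge> 0")
  case True
  assume "lattice L" "x \<in> L"
  then show ?thesis using lattice_nat_mult[of L x "nat n"] True by simp
next
  case False
  assume a: "lattice L" "x \<in> L"
  then have "- (of_nat (nat (- n)) *\<^sub>R x) \<in> L" by (intro lattice_neg lattice_nat_mult)
  then show ?thesis using False by simp
qed

lemma lattice_sep:
  assumes "lattice L"
  shows "\<exists>e>0. \<forall>x\<in>L. x \<noteq> 0 \<longrightarrow> e \<le> norm x"
proof -
  have "0 isolated_in L" using assms by (auto simp: lattice_def discrete_def)
  then obtain d where d: "d > 0" "\<And>y. y \<in> L \<Longrightarrow> dist 0 y < d \<Longrightarrow> y = 0"
    using isolated_inE_dist by metis
  then show ?thesis by (metis dist_0_norm not_le)
qed

lemma lattice_ud: "lattice L \<Longrightarrow> uniform_discrete L"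
proof -
  assume a: "lattice L"
  obtain e where e: "e > 0" "\<forall>x\<in>L. x \<noteq> 0 \<longrightarrow> e \<le> norm x" using lattice_sep[OF a] by blast
  show ?thesis
  proof (rule uniformI2[OF e(1)])
    fix x y assume "x \<in> L" "y \<in> L" "x \<noteq> y"
    then show "e \<le> dist x y" using e(2) lattice_diff[OF a] by (simp add: dist_norm)
  qed
qed

lemma lattice_finite_cball:
  fixes L :: "'a::euclidean_space set"
  assumes "lattice L" shows "finite (L \<inter> cball 0 R)"
proof -
  have "uniform_discrete (L \<inter> cball 0 R)" by (rule uniform_discrete_subset[OF lattice_ud[OF assms]]) auto
  then show ?thesis using uniform_discrete_finite_iff by blast
qed

lemma lattice_min:
  fixes L :: "'a::euclidean_space set"
  assumes "lattice L" "S \<subseteq> L" "s0 \<in> S"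
  shows "\<exists>w\<in>S. \<forall>s\<in>S. norm w \<le> norm s"
proof -
  define F where "F = S \<inter> cball 0 (norm s0)"
  have "F \<subseteq> L \<inter> cball 0 (norm s0)" using assms(2) by (auto simp: F_def)
  then have fF: "finite F" using lattice_finite_cball[OF assms(1), of "norm s0"] by (rule finite_subset)
  have "s0 \<in> F" using assms(3) by (simp add: F_def)
  then have ne: "norm ` F \<noteq> {}" by auto
  obtain w where w: "w \<in> F" "norm w = Min (norm ` F)" using Min_in[OF _ ne] fF by auto
  have "norm w \<le> norm s" if "s \<in> S" for s
  proof (cases "s \<in> F")
    case True then show ?thesis using w fF by simp
  next
    case False
    then have "norm s > norm s0" using that by (simp add: F_def)
    moreover have "norm w \<le> norm s0" using w fF \<open>s0 \<in> F\<close> by simp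
    ultimately show ?thesis by simp
  qed
  moreover have "w \<in> S" using w(1) by (simp add: F_def)
  ultimately show ?thesis by blast
qed

lemma lattice_nonzero:
  fixes L :: "'a::euclidean_space set"
  assumes "lattice L" shows "\<exists>x\<in>L. x \<noteq> 0"
proof (rule ccontr)
  assume "\<not> ?thesis"
  then have "L \<subseteq> {0}" by auto
  then have "dim L \<le> dim {0::'a}" by (rule dim_subset)
  then have d0: "dim L = 0" by simp
  from assms have "dim L = DIM('a)" by (simp add: lattice_def)
  with d0 DIM_positive[where 'a='a] show False by linarith
qed

lemma cmod_strict_triangle:
  assumes "Im (cnj a * b) \<noteq> 0"
  shows "cmod (a + b) < cmod a + cmod b"
proof -
  have "\<bar>Re (cnj a * b)\<bar>^2 < (cmod (cnj a * b))^2"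
    using assms by (simp add: cmod_power2)
  then have "\<bar>Re (cnj a * b)\<bar> < cmod (cnj a * b)"
    by (rule power2_less_imp_less) simp
  then have re: "Re (cnj a * b) < cmod a * cmod b" by (simp add: norm_mult)
  have "(cmod (a + b))^2 = (cmod a)^2 + (cmod b)^2 + 2 * Re (cnj a * b)"
    by (simp only: cmod_power2) (simp add: power2_eq_square algebra_simps)
  also have "\<dots> < (cmod a + cmod b)^2" using re by (simp add: power2_eq_square algebra_simps)
  finally show ?thesis by (smt (verit) norm_ge_zero power_mono)
qed




lemma lattice_scale_int: "lattice L \<Longrightarrow> x \<in> L \<Longrightarrow> of_int n * (x::complex) \<in> L"
  using lattice_int_mult[of L x n] by (simp add: scaleR_conv_of_real)

lemma real_multiple_if_Im0:
  assumes "w \<noteq> 0" "Im (cnj w * l) = 0"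
  shows "l = of_real (Re (cnj w * l) / (cmod w)^2) * w"
proof -
  have c: "cnj w * l = of_real (Re (cnj w * l))" using assms(2) by (simp add: complex_eq_iff)
  have n: "(cmod w)^2 \<noteq> 0" using assms(1) by simp
  have "w * cnj w = of_real ((cmod w)^2)" by (simp add: complex_mult_cnj cmod_power2)
  then have "of_real ((cmod w)^2) * l = w * of_real (Re (cnj w * l))"
    by (metis c mult.assoc)
  then show ?thesis using n by (simp add: field_simps flip: of_real_mult)
qed

lemma lattice_basis_complex:
  fixes L :: "complex set"
  assumes lat: "lattice L"
  shows "\<exists>w1 w2. w1 \<in> L \<and> w2 \<in> L \<and> Im (cnj w1 * w2) \<noteq> 0 \<and> L \<subseteq> Lat w1 w2"
proof -
  obtain x0 where x0: "x0 \<in> L" "x0 \<noteq> 0" using lattice_nonzero[OF lat] by blast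
  obtain w1 where w1: "w1 \<in> L - {0}" "\<forall>s\<in>L - {0}. cmod w1 \<le> cmod s"
    using lattice_min[OF lat, of "L - {0}" x0] x0 by auto
  have w10: "w1 \<noteq> 0" using w1 by auto
  have ex2: "\<exists>l\<in>L. Im (cnj w1 * l) \<noteq> 0"
  proof (rule ccontr)
    assume nex: "\<not> (\<exists>l\<in>L. Im (cnj w1 * l) \<noteq> 0)"
    have "L \<subseteq> span {w1}"
    proof
      fix l assume "l \<in> L"
      then have "Im (cnj w1 * l) = 0" using nex by blast
      then have "l = (Re (cnj w1 * l) / (cmod w1)^2) *\<^sub>R w1"
        using real_multiple_if_Im0[OF w10] by (simp add: scaleR_conv_of_real)
      then show "l \<in> span {w1}" by (metis span_base span_scale singletonI)
    qed
    then have "dim L \<le> card {w1}" by (rule dim_le_card) simp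
    then show False using lat by (simp add: lattice_def)
  qed
  then obtain l2 where l2: "l2 \<in> L" "Im (cnj w1 * l2) \<noteq> 0" by blast
  obtain w2 where w2: "w2 \<in> L" "Im (cnj w1 * w2) \<noteq> 0"
    "\<forall>s\<in>{l\<in>L. Im (cnj w1 * l) \<noteq> 0}. cmod w2 \<le> cmod s"
    using lattice_min[OF lat, of "{l\<in>L. Im (cnj w1 * l) \<noteq> 0}" l2] l2 by auto
  have ind: "Im (cnj w1 * w2) \<noteq> 0" by (rule w2(2))
  have w20: "w2 \<noteq> 0" using w2(2) by auto
  have w12: "cmod w1 \<le> cmod w2" using w1(2) w2(1) w20 by auto
  have "l \<in> Lat w1 w2" if lL: "l \<in> L" for l
  proof -
    define s where "s = (Re l * Im w2 - Im l * Re w2) / Im (cnj w1 * w2)"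
    define t where "t = (Re w1 * Im l - Im w1 * Re l) / Im (cnj w1 * w2)"
    have lst: "l = of_real s * w1 + of_real t * w2" using coords[OF ind, of l] by (simp add: s_def t_def)
    have tint: "t = of_int \<lfloor>t\<rfloor>"
    proof (rule ccontr)
      assume tn: "t \<noteq> of_int \<lfloor>t\<rfloor>"
      define m where "m = \<lfloor>t + 1/2\<rfloor>"
      define n where "n = \<lfloor>s + 1/2\<rfloor>"
      define \<tau> where "\<tau> = t - of_int m"
      define \<sigma> where "\<sigma> = s - of_int n"
      have \<tau>b: "\<bar>\<tau>\<bar> \<le> 1/2" unfolding \<tau>_def m_def by linarith
      have \<sigma>b: "\<bar>\<sigma>\<bar> \<le> 1/2" unfolding \<sigma>_def n_def by linarith
      have \<tau>0: "\<tau> \<noteq> 0"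
      proof
        assume "\<tau> = 0"
        then have "t = of_int m" by (simp add: \<tau>_def)
        then show False using tn by simp
      qed
      define l' where "l' = l - of_int n * w1 - of_int m * w2"
      have l'L: "l' \<in> L" unfolding l'_def
        using lL w1(1) w2(1) lat by (intro lattice_diff lattice_scale_int) auto
      have l'eq: "l' = of_real \<sigma> * w1 + of_real \<tau> * w2"
        by (simp add: l'_def lst \<sigma>_def \<tau>_def algebra_simps)
      have "Im (cnj w1 * l') = \<tau> * Im (cnj w1 * w2)"
        by (simp add: l'eq algebra_simps)
      then have "Im (cnj w1 * l') \<noteq> 0" using \<tau>0 ind by simp
      then have ge: "cmod w2 \<le> cmod l'" using w2(3) l'L by auto
      have "cmod l' < cmod w2"
      proof (cases "\<sigma> = 0")
        case True
        then have "cmod l' = \<bar>\<tau>\<bar> * cmod w2" by (simp add: l'eq norm_mult)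
        also have "\<dots> < cmod w2" using \<tau>b w20 by (simp add: mult_less_cancel_right1 less_le_trans[of _ "1/2"])
        finally show ?thesis .
      next
        case False
        have "Im (cnj (of_real \<sigma> * w1) * (of_real \<tau> * w2)) = \<sigma> * \<tau> * Im (cnj w1 * w2)"
          by (simp add: algebra_simps)
        then have "Im (cnj (of_real \<sigma> * w1) * (of_real \<tau> * w2)) \<noteq> 0" using False \<tau>0 ind by simp
        then have "cmod l' < cmod (of_real \<sigma> * w1) + cmod (of_real \<tau> * w2)"
          unfolding l'eq by (rule cmod_strict_triangle)
        also have "\<dots> = \<bar>\<sigma>\<bar> * cmod w1 + \<bar>\<tau>\<bar> * cmod w2" by (simp add: norm_mult)
        also have "\<dots> \<le> 1/2 * cmod w2 + 1/2 * cmod w2"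
          using \<sigma>b \<tau>b w12 by (intro add_mono mult_mono) auto
        finally show ?thesis by simp
      qed
      then show False using ge by simp
    qed
    define m where "m = \<lfloor>t\<rfloor>"
    have tc: "complex_of_real t = of_int m" using tint unfolding m_def by (metis of_real_of_int_eq)
    have sint: "s = of_int \<lfloor>s\<rfloor>"
    proof (rule ccontr)
      assume sn: "s \<noteq> of_int \<lfloor>s\<rfloor>"
      define \<sigma> where "\<sigma> = s - of_int \<lfloor>s\<rfloor>"
      have \<sigma>b: "0 < \<sigma>" "\<sigma> < 1" using sn unfolding \<sigma>_def by linarith+
      define l' where "l' = l - of_int \<lfloor>s\<rfloor> * w1 - of_int m * w2"
      have l'L: "l' \<in> L" unfolding l'_def
        using lL w1(1) w2(1) lat by (intro lattice_diff lattice_scale_int) auto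
      have l'eq: "l' = of_real \<sigma> * w1"
        by (simp add: l'_def lst \<sigma>_def tc algebra_simps)
      then have "l' \<noteq> 0" using \<sigma>b w10 by simp
      then have "cmod w1 \<le> cmod l'" using w1(2) l'L by auto
      moreover have "cmod l' < cmod w1" using \<sigma>b w10 by (simp add: l'eq norm_mult)
      ultimately show False by simp
    qed
    have "l = of_int \<lfloor>s\<rfloor> * w1 + of_int m * w2"
    proof -
      have sc: "complex_of_real s = of_int \<lfloor>s\<rfloor>" using sint by (metis of_real_of_int_eq)
      show ?thesis using lst by (simp add: sc tc)
    qed
    then show ?thesis by (auto simp: Lat_def)
  qed
  then show ?thesis using w1(1) w2(1) ind by blast
qed




lemma complex_case:
  fixes L :: "complex set"
  assumes lat: "lattice L" and muL: "\<mu> \<in> L" and cm: "cmod \<mu> > 1" and st: "\<forall>x\<in>L. \<mu> * x \<in> L"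
  shows "\<exists>R N T. inflationary_tessellation (\<lambda>z. \<mu> * z) R N T"
proof -
  obtain w1 w2 where w: "w1 \<in> L" "w2 \<in> L" "Im (cnj w1 * w2) \<noteq> 0" "L \<subseteq> Lat w1 w2"
    using lattice_basis_complex[OF lat] by blast
  have w10: "w1 \<noteq> 0" using w(3) by auto
  obtain a b :: int where ab: "\<mu> * w1 = of_int a * w1 + of_int b * w2"
    using st w(1) w(4) by (force simp: Lat_def)
  obtain c d :: int where cd: "\<mu> * w2 = of_int c * w1 + of_int d * w2"
    using st w(2) w(4) by (force simp: Lat_def)
  show ?thesis
  proof (cases "Im \<mu> = 0")
    case True
    have "Im (cnj w1 * (\<mu> * w1)) = 0" using True by (simp add: algebra_simps)
    then have "Im (cnj w1 * (of_int a * w1 + of_int b * w2)) = 0" using ab by simp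
    then have "of_int b * Im (cnj w1 * w2) = 0" by (simp add: algebra_simps)
    then have b0: "b = 0" using w(3) by simp
    then have "\<mu> * w1 = of_int a * w1" using ab by simp
    then have mu: "\<mu> = of_int a" using w10 by simp
    define k where "k = \<bar>a\<bar>"
    have k2: "k \<ge> 2" using cm mu by (simp add: k_def)
    define D where "D = (\<lambda>(i, j). of_int i + \<i> * of_int j :: complex) ` ({0..<k} \<times> {0..<k})"
    have sk: "a * sgn a = k" using k2 by (cases "a > 0") (auto simp: k_def)
    have fD: "finite D" by (simp add: D_def)
    have zD: "0 \<in> D" using k2 by (force simp: D_def image_iff)
    have iD: "Im (cnj 1 * \<i>) \<noteq> 0" by simp
    have cD: "real (card D) \<le> cmod \<mu> ^ 2"
    proof -
      have "card D \<le> card ({0..<k} \<times> {0..<k})" unfolding D_def by (rule card_image_le) simp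
      also have "\<dots> = nat k * nat k" by (simp add: card_cartesian_product)
      finally have "real (card D) \<le> real (nat k * nat k)" by linarith
      also have "\<dots> = cmod \<mu> ^ 2" using k2 by (simp add: mu k_def power2_eq_square)
      finally show "real (card D) \<le> cmod \<mu> ^ 2" .
    qed
    have eD: "\<forall>l\<in>Lat 1 \<i>. \<exists>d\<in>D. \<exists>l'\<in>Lat 1 \<i>. l = d + \<mu> * l'"
      proof
        fix l assume "l \<in> Lat 1 \<i>"
        then obtain x y :: int where l: "l = of_int x + of_int y * \<i>" by (auto simp: Lat_def)
        define dd where "dd = of_int (x mod k) + \<i> * of_int (y mod k)"
        define l' where "l' = of_int (sgn a * (x div k)) * 1 + of_int (sgn a * (y div k)) * \<i>"
        have "dd \<in> D" using k2 unfolding D_def dd_def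
          by (intro image_eqI[of _ _ "(x mod k, y mod k)"]) auto
        moreover have "l' \<in> Lat 1 \<i>" unfolding l'_def Lat_def by blast
        moreover have "l = dd + \<mu> * l'"
        proof -
          have x: "of_int x = (of_int (x mod k) + of_int k * of_int (x div k) :: complex)"
            by (metis mod_mult_div_eq of_int_add of_int_mult add.commute)
          have y: "of_int y = (of_int (y mod k) + of_int k * of_int (y div k) :: complex)"
            by (metis mod_mult_div_eq of_int_add of_int_mult add.commute)
          have kk: "(of_int k :: complex) = of_int a * of_int (sgn a)" using sk by (metis of_int_mult)
          show ?thesis unfolding l dd_def l'_def mu
            by (subst x, subst y, simp only: kk) (simp add: algebra_simps)
        qed
        ultimately show "\<exists>d\<in>D. \<exists>l'\<in>Lat 1 \<i>. l = d + \<mu> * l'" by blast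
      qed
    show ?thesis by (rule core[OF cm fD zD cD eD iD])
  next
    case False
    have e1: "(\<mu> - of_int a) * w1 = of_int b * w2" using ab by (simp add: algebra_simps)
    have e2: "(\<mu> - of_int d) * w2 = of_int c * w1" using cd by (simp add: algebra_simps)
    have "(\<mu> - of_int a) * (\<mu> - of_int d) * w1 = of_int b * ((\<mu> - of_int d) * w2)"
      using e1 by (metis mult.assoc mult.commute)
    also have "\<dots> = of_int b * of_int c * w1" using e2 by simp
    finally have "(\<mu> - of_int a) * (\<mu> - of_int d) = of_int b * of_int c" using w10 by simp
    then have quad: "\<mu> * \<mu> = of_int (a + d) * \<mu> - of_int (a * d - b * c)"
      by (simp add: algebra_simps)
    define t where "t = a + d"
    define n where "n = a * d - b * c"
    have q: "\<mu> * \<mu> = of_int t * \<mu> - of_int n" using quad by (simp add: t_def n_def)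
    have "Im (\<mu> * \<mu>) = Im (of_int t * \<mu> - of_int n)" using q by simp
    then have "2 * Re \<mu> * Im \<mu> = of_int t * Im \<mu>" by simp
    then have tre: "of_int t = 2 * Re \<mu>" using False by simp
    have "Re (\<mu> * \<mu>) = Re (of_int t * \<mu> - of_int n)" using q by simp
    then have "Re \<mu> * Re \<mu> - Im \<mu> * Im \<mu> = of_int t * Re \<mu> - of_int n" by simp
    then have "of_int n = Re \<mu> ^ 2 + Im \<mu> ^ 2" using tre by (simp add: power2_eq_square algebra_simps)
    then have nre: "of_int n = cmod \<mu> ^ 2" by (simp add: cmod_power2)
    have n2: "n \<ge> 2"
    proof -
      have "cmod \<mu> ^ 2 > 1" using cm by (simp add: one_less_power)
      then have "(of_int n :: real) > 1" using nre by simp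
      then show ?thesis by linarith
    qed
    define D where "D = (\<lambda>i. of_int i :: complex) ` {0..<n}"
    have fD: "finite D" by (simp add: D_def)
    have zD: "0 \<in> D" using n2 by (force simp: D_def image_iff)
    have iD: "Im (cnj 1 * \<mu>) \<noteq> 0" using False by simp
    have cD: "real (card D) \<le> cmod \<mu> ^ 2"
    proof -
      have "card D \<le> card {0..<n}" unfolding D_def by (rule card_image_le) simp
      then have "real (card D) \<le> real (nat n)" by simp
      also have "\<dots> = cmod \<mu> ^ 2" using n2 nre by simp
      finally show "real (card D) \<le> cmod \<mu> ^ 2" .
    qed
    have eD: "\<forall>l\<in>Lat 1 \<mu>. \<exists>d\<in>D. \<exists>l'\<in>Lat 1 \<mu>. l = d + \<mu> * l'"
      proof
        fix l assume "l \<in> Lat 1 \<mu>"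
        then obtain x y :: int where l: "l = of_int x + of_int y * \<mu>" by (auto simp: Lat_def)
        define qq where "qq = x div n"
        define dd where "dd = (of_int (x mod n) :: complex)"
        define l' where "l' = of_int (qq * t + y) * 1 + of_int (- qq) * \<mu>"
        have "dd \<in> D" using n2 by (auto simp: D_def dd_def)
        moreover have "l' \<in> Lat 1 \<mu>" unfolding l'_def Lat_def by blast
        moreover have "l = dd + \<mu> * l'"
        proof -
          have x: "of_int x = (of_int (x mod n) + of_int qq * of_int n :: complex)"
            unfolding qq_def by (metis mod_div_mult_eq of_int_add of_int_mult)
          have "dd + \<mu> * l' = of_int (x mod n) + of_int qq * of_int t * \<mu> + of_int y * \<mu> - of_int qq * (\<mu> * \<mu>)"
            by (simp add: dd_def l'_def algebra_simps)
          also have "\<dots> = of_int (x mod n) + of_int qq * of_int n + of_int y * \<mu>"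
            by (simp add: q algebra_simps)
          also have "\<dots> = l" by (simp add: l x)
          finally show ?thesis by simp
        qed
        ultimately show "\<exists>d\<in>D. \<exists>l'\<in>Lat 1 \<mu>. l = d + \<mu> * l'" by blast
      qed
    show ?thesis by (rule core[OF cm fD zD cD eD iD])
  qed
qed




definition unitI :: "int \<Rightarrow> real set" where "unitI j = {of_int j .. of_int j + 1}"

lemma unitI_ess: "i \<noteq> j \<Longrightarrow> ess_disjoint (unitI i) (unitI j)"
proof -
  assume ij: "i \<noteq> j"
  have "unitI i \<inter> unitI j \<subseteq> {of_int (max i j)}"
  proof
    fix x assume x: "x \<in> unitI i \<inter> unitI j"
    show "x \<in> {of_int (max i j)}"
    proof (cases "i < j")
      case True
      then have "of_int i + 1 \<le> (of_int j :: real)" by linarith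
      then show ?thesis using x True by (auto simp: unitI_def max_def)
    next
      case False
      then have "of_int j + 1 \<le> (of_int i :: real)" using ij by linarith
      then show ?thesis using x False by (auto simp: unitI_def max_def)
    qed
  qed
  moreover have "{of_int (max i j) :: real} \<in> null_sets lebesgue" by simp
  moreover have "unitI i \<inter> unitI j \<in> sets lebesgue" by (simp add: unitI_def)
  ultimately have "unitI i \<inter> unitI j \<in> null_sets lebesgue"
    by (metis null_sets_subset)
  then show ?thesis by (simp add: ess_disjoint_def)
qed

lemma unitI_pairwise: "pairwise ess_disjoint (unitI ` A)"
  by (rule pairwiseI) (auto intro: unitI_ess)

lemma unitI_type: "of_type (\<lambda>_. {0..1::real}) 1 (unitI j)"
  unfolding of_type_def unitI_def
  by (intro exI[of _ 0] conjI exI[of _ "of_int j"]) (auto simp: add.commute)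

lemma real_case:
  fixes L :: "real set"
  assumes lat: "lattice L" and muL: "\<mu> \<in> L" and cm: "\<bar>\<mu>\<bar> > 1" and st: "\<forall>x\<in>L. \<mu> * x \<in> L"
  shows "\<exists>R N T. inflationary_tessellation (\<lambda>z. \<mu> * z) R N T"
proof -
  obtain x0 where x0: "x0 \<in> L" "x0 \<noteq> 0" using lattice_nonzero[OF lat] by blast
  obtain w where w: "w \<in> L - {0}" "\<forall>s\<in>L - {0}. norm w \<le> norm s"
    using lattice_min[OF lat, of "L - {0}" x0] x0 by auto
  have muint: "\<mu> = of_int \<lfloor>\<mu>\<rfloor>"
  proof (rule ccontr)
    assume ne: "\<mu> \<noteq> of_int \<lfloor>\<mu>\<rfloor>"
    define f where "f = \<mu> - of_int \<lfloor>\<mu>\<rfloor>"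
    have f: "0 < f" "f < 1" using ne unfolding f_def by linarith+
    have "\<mu> * w - of_int \<lfloor>\<mu>\<rfloor> *\<^sub>R w \<in> L"
      using w st lat by (intro lattice_diff lattice_int_mult) auto
    then have fL: "f * w \<in> L" by (simp add: f_def algebra_simps)
    have "f * w \<noteq> 0" using f w by auto
    then have "norm w \<le> norm (f * w)" using w(2) fL by auto
    moreover have "norm (f * w) < norm w" using f w by (simp add: abs_mult)
    ultimately show False by simp
  qed
  define m where "m = \<lfloor>\<mu>\<rfloor>"
  have mu: "\<mu> = of_int m" using muint by (simp add: m_def)
  have m0: "m \<noteq> 0" using cm mu by auto
  define R where "R = (\<lambda>_::nat. {0..1::real})"
  define T where "T = range unitI"
  have tile: "is_tile {0..1::real}"
    by (simp add: is_tile_def)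
  have tess: "tessellation R 1 T"
    unfolding tessellation_def
  proof (intro conjI allI impI ballI)
    show "is_tile (R i)" for i using tile by (simp add: R_def)
    show "of_type R 1 t" if "t \<in> T" for t using that unitI_type by (auto simp: T_def R_def)
    show "pairwise ess_disjoint T" by (simp add: T_def unitI_pairwise)
    show "\<Union>T = UNIV"
    proof (intro equalityI subsetI UNIV_I)
      fix x :: real
      have "x \<in> unitI \<lfloor>x\<rfloor>" by (simp add: unitI_def)
      then show "x \<in> \<Union>T" by (auto simp: T_def)
    qed
  qed
  define lo where "lo = min 0 m"
  define hi where "hi = max 0 m"
  have hl: "hi - lo = \<bar>m\<bar>" by (simp add: lo_def hi_def)
  have img: "(\<lambda>z. \<mu> * z) ` {0..1} = {of_int lo .. of_int hi :: real}"
    using m0 by (auto simp: mu lo_def hi_def image_mult_atLeastAtMost_if min_def max_def)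
  define S where "S = unitI ` {lo..<hi}"
  have US: "\<Union>S = {of_int lo .. of_int hi}"
  proof (intro equalityI subsetI)
    fix x assume "x \<in> \<Union>S"
    then obtain j where "j \<in> {lo..<hi}" "x \<in> unitI j" by (auto simp: S_def)
    then show "x \<in> {of_int lo .. of_int hi}" by (auto simp: unitI_def)
  next
    fix x assume x: "x \<in> {real_of_int lo .. of_int hi}"
    show "x \<in> \<Union>S"
    proof (cases "x < of_int hi")
      case True
      have "\<lfloor>x\<rfloor> \<in> {lo..<hi}" using x True by (auto simp: le_floor_iff floor_less_iff)
      moreover have "x \<in> unitI \<lfloor>x\<rfloor>" by (simp add: unitI_def)
      ultimately show ?thesis by (auto simp: S_def)
    next
      case False
      then have "x = of_int hi" using x by auto
      moreover have "hi - 1 \<in> {lo..<hi}" using hl m0 by auto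
      moreover have "of_int hi \<in> unitI (hi - 1)" by (simp add: unitI_def)
      ultimately show ?thesis unfolding S_def by blast
    qed
  qed
  have infl: "\<exists>S. (\<forall>s\<in>S. of_type R 1 s) \<and> pairwise ess_disjoint S \<and> \<Union>S = (\<lambda>z. \<mu> * z) ` R i" for i
    using unitI_type unitI_pairwise US img by (intro exI[of _ S]) (auto simp: S_def R_def)
  have "inflationary_tessellation (\<lambda>z. \<mu> * z) R 1 T"
    unfolding inflationary_tessellation_def using tess infl by blast
  then show ?thesis by blast
qed



theorem mainTheorem1:
  shows "(\<forall>(L::real set) (\<mu>::real). lattice L \<and> \<mu> \<in> L \<and> \<bar>\<mu>\<bar> > 1 \<and> (\<forall>x\<in>L. \<mu> * x \<in> L)
            \<longrightarrow> (\<exists>R N T. inflationary_tessellation (\<lambda>z. \<mu> * z) R N T))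
       \<and> (\<forall>(L::complex set) (\<mu>::complex). lattice L \<and> \<mu> \<in> L \<and> cmod \<mu> > 1 \<and> (\<forall>x\<in>L. \<mu> * x \<in> L)
            \<longrightarrow> (\<exists>R N T. inflationary_tessellation (\<lambda>z. \<mu> * z) R N T))"
  using real_case complex_case by blast

end
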